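(* Let $n\ge1$ and let $A$ be an admissible set in $\{1,3,\dots,2n+1\}$ with associated vector $(a(1),\dots,a(2n))$. Let $\widehat{A}$ be the set of primary odd-odd-descent permutations $\sigma\in\mathcal{W}^*_{2n+1}$ whose set of valleys is exactly the set of white elements of $A$ and whose set of peaks is exactly the set of black elements of $A$. Then \[ \sum_{\sigma\in\widehat{A}} q^{\mathrm{art}(\sigma)}=\prod_{i=1}^{2n}[a(i)]_q . \]
   Context: $[k]_q=1+q+\cdots+q^{k-1}$. For $\sigma\in\mathfrak{S}_m$, a descent is an index $i$ with $\sigma_i>\sigma_{i+1}$; $\mathcal{W}^*_{2n+1}$ is the set of permutations of $[2n+1]$ whose every descent pair $(\sigma_i,\sigma_{i+1})$ consists of two odd numbers and whose last entry is odd. With $\sigma_0=\sigma_{m+1}=0$, $\sigma_i$ is a peak if $\sigma_{i-1}<\sigma_i>\sigma_{i+1}$, a valley if $\sigma_{i-1}>\sigma_i<\sigma_{i+1}$, a double descent if $\sigma_{i-1}>\sigma_i>\sigma_{i+1}$. $\mathrm{art}(\sigma)=\sum_{i=1}^m(v(i)-p(i))$, where $v(i)$ (resp. $p(i)$) counts valleys (resp. peaks) less than $i$ located to the left of $i$ in $\sigma$. $\sigma\in\mathcal{W}^*_{2n+1}$ is primary odd-odd-descent if it has no double descent and $\sigma_{2n}<\sigma_{2n+1}$. An admissible set in $\{1,3,\dots,2n+1\}$ is a set $A$ of odd numbers in $\{1,3,\dots,2n+1\}$, each colored white or black, such that: (i) $A$ has $k$ white and $k+1$ black elements for some $k\ge0$,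 and $2n+1$ is black; (ii) for each $i\in[2n]$, $A\cap\{1,\dots,i\}$ has at least as many white as black elements. Its vector is $a(i)=f(i)-g(i)+1$ for $1\le i\le 2n$, where $f(i)$ (resp. $g(i)$) is the number of white (resp. black) elements of $A$ less than $i$. *)

theory Defs
  imports Main
begin

text \<open>Permutations of [m] are lists xs with distinct xs and set xs = {1..m}.
  Entries are 1-based, with the convention sigma_0 = sigma_(m+1) = 0.\<close>

definition is_perm :: "nat \<Rightarrow> nat list \<Rightarrow> bool" where
  "is_perm m xs \<longleftrightarrow> distinct xs \<and> set xs = {1..m}"

definition ent :: "nat list \<Rightarrow> nat \<Rightarrow> nat" where
  "ent xs i = (if 1 \<le> i \<and> i \<le> length xs then xs ! (i - 1) else 0)"

definition is_descent :: "nat list \<Rightarrow> nat \<Rightarrow> bool" where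
  "is_descent xs i \<longleftrightarrow> 1 \<le> i \<and> i < length xs \<and> ent xs i > ent xs (Suc i)"

definition Wstar :: "nat \<Rightarrow> nat list set" where
  "Wstar n = {xs. is_perm (2*n+1) xs
      \<and> (\<forall>i. is_descent xs i \<longrightarrow> odd (ent xs i) \<and> odd (ent xs (Suc i)))
      \<and> odd (ent xs (2*n+1))}"

definition peak_pos :: "nat list \<Rightarrow> nat \<Rightarrow> bool" where
  "peak_pos xs i \<longleftrightarrow> 1 \<le> i \<and> i \<le> length xs
      \<and> ent xs (i - 1) < ent xs i \<and> ent xs i > ent xs (Suc i)"

definition valley_pos :: "nat list \<Rightarrow> nat \<Rightarrow> bool" where
  "valley_pos xs i \<longleftrightarrow> 1 \<le> i \<and> i \<le> length xs
      \<and> ent xs (i - 1) > ent xs i \<and> ent xs i < ent xs (Suc i)"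

definition ddesc_pos :: "nat list \<Rightarrow> nat \<Rightarrow> bool" where
  "ddesc_pos xs i \<longleftrightarrow> 1 \<le> i \<and> i \<le> length xs
      \<and> ent xs (i - 1) > ent xs i \<and> ent xs i > ent xs (Suc i)"

definition peaks :: "nat list \<Rightarrow> nat set" where
  "peaks xs = {ent xs i | i. peak_pos xs i}"

definition valleys :: "nat list \<Rightarrow> nat set" where
  "valleys xs = {ent xs i | i. valley_pos xs i}"

text \<open>art(sigma) = sum over values x of (v(x) - p(x)); we sum over the position k of x,
  v counts valley positions j left of k with value < sigma_k, similarly p for peaks.\<close>
definition art :: "nat list \<Rightarrow> int" where
  "art xs = (\<Sum>k=1..length xs.
      int (card {j. j < k \<and> valley_pos xs j \<and> ent xs j < ent xs k})
    - int (card {j. j < k \<and> peak_pos xs j \<and> ent xs j < ent xs k}))"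

definition primary :: "nat \<Rightarrow> nat list \<Rightarrow> bool" where
  "primary n xs \<longleftrightarrow> xs \<in> Wstar n \<and> (\<forall>i. \<not> ddesc_pos xs i)
      \<and> ent xs (2*n) < ent xs (2*n+1)"

text \<open>A coloured set A is given by its white part Wh and black part Bl.\<close>
definition admissible :: "nat \<Rightarrow> nat set \<Rightarrow> nat set \<Rightarrow> bool" where
  "admissible n Wh Bl \<longleftrightarrow>
      Wh \<subseteq> {x\<in>{1..2*n+1}. odd x} \<and> Bl \<subseteq> {x\<in>{1..2*n+1}. odd x} \<and> Wh \<inter> Bl = {}
    \<and> card Bl = card Wh + 1 \<and> 2*n+1 \<in> Bl
    \<and> (\<forall>i\<in>{1..2*n}. card (Bl \<inter> {1..i}) \<le> card (Wh \<inter> {1..i}))"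

definition avec :: "nat set \<Rightarrow> nat set \<Rightarrow> nat \<Rightarrow> int" where
  "avec Wh Bl i = int (card {x\<in>Wh. x < i}) - int (card {x\<in>Bl. x < i}) + 1"

definition qint :: "'a::comm_ring_1 \<Rightarrow> int \<Rightarrow> 'a" where
  "qint q k = (\<Sum>j<nat k. q ^ j)"

definition Ahat :: "nat \<Rightarrow> nat set \<Rightarrow> nat set \<Rightarrow> nat list set" where
  "Ahat n Wh Bl = {xs. primary n xs \<and> valleys xs = Wh \<and> peaks xs = Bl}"

end

theory Submission
  imports Defs Complex_Main
begin



lemma qint_Suc: "0 \<le> k \<Longrightarrow> qint q (k+1) = 1 + q * qint q k"
proof -
  assume "0 \<le> k"
  then have "nat (k+1) = Suc (nat k)" by simp
  then show ?thesis unfolding qint_def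
    by (simp add: sum.lessThan_Suc_shift sum_distrib_left del: sum.lessThan_Suc)
qed

lemma qint_0[simp]: "qint q 0 = 0" by (simp add: qint_def)
lemma qint_1[simp]: "qint q 1 = 1" by (simp add: qint_def)

context fixes W B :: "nat set" begin

definition R :: "nat \<Rightarrow> nat \<Rightarrow> bool" where
  "R x y \<longleftrightarrow> (y \<notin> W \<longrightarrow> x < y \<and> x \<notin> B) \<and> (y \<in> W \<and> x \<in> B \<longrightarrow> y < x)"

fun adj :: "nat list \<Rightarrow> bool" where
  "adj (x#y#r) = (R x y \<and> adj (y#r))" | "adj _ = True"

fun adjP :: "nat list \<Rightarrow> bool" where
  "adjP (x#y#r) = ((x \<in> B \<longrightarrow> y \<in> W) \<and> adjP (y#r))" | "adjP _ = True"

lemma adj_Cons: "adj (x#us) = ((us = [] \<or> R x (hd us)) \<and> adj us)"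
  by (cases us) auto

lemma adjP_Cons: "adjP (x#us) = ((us = [] \<or> (x \<in> B \<longrightarrow> hd us \<in> W)) \<and> adjP us)"
  by (cases us) auto

lemma adj_adjP: "adj xs \<Longrightarrow> adjP xs"
  by (induction xs rule: adj.induct) (auto simp: R_def)

definition validb :: "bool \<Rightarrow> nat list \<Rightarrow> bool" where
  "validb b zs \<longleftrightarrow> (b \<longrightarrow> zs = [] \<or> hd zs \<in> W) \<and> adjP zs"

definition slotb :: "bool \<Rightarrow> nat list \<Rightarrow> nat \<Rightarrow> bool" where
  "slotb b zs p \<longleftrightarrow> p \<le> length zs \<and> (p = length zs \<or> zs!p \<in> W)
     \<and> (if p = 0 then \<not> b else zs!(p-1) \<notin> B)"

definition cc :: "nat list \<Rightarrow> nat \<Rightarrow> int" where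
  "cc zs p = int (length (filter (\<lambda>x. x\<in>W) (take p zs))) - int (length (filter (\<lambda>x. x\<in>B) (take p zs)))"

definition wc :: "nat list \<Rightarrow> int" where
  "wc zs = int (length (filter (\<lambda>x. x\<in>W) zs)) - int (length (filter (\<lambda>x. x\<in>B) zs))"

lemma slot_set_Nil: "{p. slotb b [] p} = (if b then {} else {0})"
  by (auto simp: slotb_def)

lemma slot_set_Cons: "{p. slotb b (x#us) p} = (if \<not> b \<and> x \<in> W then {0} else {}) \<union> Suc ` {p. slotb (x\<in>B) us p}"
proof (rule set_eqI)
  fix p show "p \<in> {p. slotb b (x#us) p} \<longleftrightarrow> p \<in> (if \<not> b \<and> x \<in> W then {0} else {}) \<union> Suc ` {p. slotb (x\<in>B) us p}"
  proof (cases p)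
    case 0 then show ?thesis by (auto simp: slotb_def)
  next
    case (Suc p')
    have "(Suc p' \<in> Suc ` {p. slotb (x\<in>B) us p}) = slotb (x\<in>B) us p'" by auto
    moreover have "slotb b (x#us) (Suc p') = slotb (x\<in>B) us p'"
      by (cases p') (auto simp: slotb_def)
    ultimately show ?thesis using Suc by auto
  qed
qed

lemma cc_Cons_Suc: "W \<inter> B = {} \<Longrightarrow> cc (x#us) (Suc p) = (if x \<in> W then 1 else if x \<in> B then -1 else 0) + cc us p"
  by (auto simp: cc_def)

lemma slot_count:
  fixes q :: "'a::field"
  assumes WB: "W \<inter> B = {}" and q: "q \<noteq> 0"
  shows "validb b zs \<Longrightarrow> (\<Sum>p\<in>{p. slotb b zs p}. q powi cc zs p)
     = q powi (if b then 1 else 0) * qint q ((if b then 0 else 1) + wc zs)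
     \<and> 0 \<le> (if b then 0 else 1) + wc zs"
proof (induction zs arbitrary: b)
  case Nil
  then show ?case by (auto simp: slot_set_Nil wc_def cc_def)
next
  case (Cons x us)
  define d :: int where "d = (if x \<in> W then 1 else if x \<in> B then -1 else 0)"
  have v: "validb (x\<in>B) us" using Cons.prems by (auto simp: validb_def adjP_Cons)
  from Cons.IH[OF v] have IH:
    "(\<Sum>p\<in>{p. slotb (x\<in>B) us p}. q powi cc us p) = q powi (if x\<in>B then 1 else 0) * qint q ((if x\<in>B then 0 else 1) + wc us)"
    "0 \<le> (if x\<in>B then 0 else 1) + wc us" by auto
  have fin: "finite {p. slotb (x\<in>B) us p}"
    by (rule finite_subset[of _ "{..length us}"]) (auto simp: slotb_def)
  have "(\<Sum>p\<in>{p. slotb b (x#us) p}. q powi cc (x#us) p)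
      = (if \<not> b \<and> x \<in> W then 1 else 0) + (\<Sum>p\<in>Suc ` {p. slotb (x\<in>B) us p}. q powi cc (x#us) p)"
    unfolding slot_set_Cons using fin
    by (subst sum.union_disjoint) (auto simp: cc_def)
  also have "(\<Sum>p\<in>Suc ` {p. slotb (x\<in>B) us p}. q powi cc (x#us) p)
      = (\<Sum>p\<in>{p. slotb (x\<in>B) us p}. q powi d * q powi cc us p)"
    by (subst sum.reindex) (auto simp: cc_Cons_Suc[OF WB] d_def power_int_add q)
  also have "\<dots> = q powi d * (q powi (if x\<in>B then 1 else 0) * qint q ((if x\<in>B then 0 else 1) + wc us))"
    by (simp add: sum_distrib_left[symmetric] IH)
  finally have S: "(\<Sum>p\<in>{p. slotb b (x#us) p}. q powi cc (x#us) p) =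
     (if \<not> b \<and> x \<in> W then 1 else 0) + q powi d * (q powi (if x\<in>B then 1 else 0) * qint q ((if x\<in>B then 0 else 1) + wc us))" .
  have wcx: "wc (x#us) = d + wc us" using WB by (auto simp: wc_def d_def)
  show ?case
  proof (cases "x \<in> W")
    case True
    then have "x \<notin> B" using WB by auto
    then show ?thesis using S IH True wcx qint_Suc[OF IH(2), of q]
      by (auto simp: d_def add.commute add.left_commute)
  next
    case False
    note xW = False
    have nb: "\<not> b" using Cons.prems xW by (auto simp: validb_def)
    show ?thesis
    proof (cases "x \<in> B")
      case True
      then show ?thesis using S IH xW nb wcx q by (auto simp: d_def power_int_minus)
    next
      case False
      then show ?thesis using S IH xW nb wcx by (auto simp: d_def)
    qed
  qed
qed

end



definition ins :: "nat \<Rightarrow> nat \<Rightarrow> nat list \<Rightarrow> nat list" where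
  "ins p i zs = take p zs @ i # drop p zs"

fun cnt :: "nat set \<Rightarrow> nat list \<Rightarrow> nat" where
  "cnt P [] = 0"
| "cnt P (x#us) = (if x \<in> P then length (filter (\<lambda>y. x < y) us) else 0) + cnt P us"

lemma cnt_ins: "\<forall>x\<in>set zs. x < i \<Longrightarrow> p \<le> length zs \<Longrightarrow>
   cnt P (ins p i zs) = cnt P zs + length (filter (\<lambda>x. x\<in>P) (take p zs))"
proof (induction zs arbitrary: p)
  case Nil then show ?case by (simp add: ins_def)
next
  case (Cons x us)
  show ?case
  proof (cases p)
    case 0
    have "filter (\<lambda>y. i < y) (x#us) = []" using Cons.prems by (auto simp: filter_empty_conv)
    then show ?thesis using 0 by (simp add: ins_def)
  next
    case (Suc p')
    have e: "ins p i (x#us) = x # ins p' i us" using Suc by (simp add: ins_def)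
    have "length (filter ((<) x) (ins p' i us)) = Suc (length (filter ((<) x) us))"
      using Cons.prems Suc by (simp add: ins_def) (metis append_take_drop_id filter_append length_append)
    then show ?thesis using e Cons.IH[of p'] Cons.prems Suc by auto
  qed
qed

context fixes W B :: "nat set" begin

lemma adj_ins: "\<forall>x\<in>set zs. x < i \<Longrightarrow> p \<le> length zs \<Longrightarrow>
   adj W B (ins p i zs) \<longleftrightarrow> adj W B zs \<and> slotb W B False zs p"
proof (induction zs arbitrary: p)
  case Nil then show ?case by (simp add: ins_def slotb_def)
next
  case (Cons x us)
  show ?case
  proof (cases p)
    case 0
    then show ?thesis using Cons.prems by (auto simp: ins_def slotb_def R_def)
  next
    case (Suc p')
    show ?thesis
    proof (cases p')
      case 0
      then show ?thesis using Cons.prems Suc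
        by (cases us) (auto simp: ins_def slotb_def R_def)
    next
      case (Suc p'')
      then obtain y vs where us: "us = y # vs" using Cons.prems \<open>p = Suc p'\<close> by (cases us) auto
      have e: "ins p i (x#us) = x # ins p' i us" using \<open>p = Suc p'\<close> by (simp add: ins_def)
      have h: "hd (ins p' i us) = y" using us Suc by (simp add: ins_def)
      have ne: "ins p' i us \<noteq> []" by (simp add: ins_def)
      have sl: "slotb W B False (x#us) p = slotb W B False us p'"
        using \<open>p = Suc p'\<close> Suc by (auto simp: slotb_def)
      show ?thesis using Cons.IH[of p'] Cons.prems \<open>p = Suc p'\<close> e h ne sl us
        by (simp add: adj_Cons)
    qed
  qed
qed

end



context fixes W B :: "nat set" begin

definition S :: "nat \<Rightarrow> nat list set" where
  "S i = {ys. distinct ys \<and> set ys = {1..i} \<and> adj W B ys}"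

definition art' :: "nat list \<Rightarrow> int" where
  "art' ys = int (cnt W ys) - int (cnt B ys)"

lemma S_finite: "finite (S i)"
proof (rule finite_subset[of _ "{xs. set xs \<subseteq> {1..i} \<and> length xs = i}"])
  show "S i \<subseteq> {xs. set xs \<subseteq> {1..i} \<and> length xs = i}"
    unfolding S_def using distinct_card by fastforce
qed (rule finite_lists_length_eq, simp)

lemma S_0: "S 0 = {[]}"
  by (auto simp: S_def)

lemma S_Suc: "S (Suc k) = (\<lambda>(zs,p). ins p (Suc k) zs) ` (SIGMA zs:S k. {p. slotb W B False zs p})"
proof (rule set_eqI, rule iffI)
  fix ys assume ys: "ys \<in> S (Suc k)"
  then have "Suc k \<in> set ys" by (auto simp: S_def)
  then obtain as bs where e: "ys = as @ Suc k # bs" by (meson split_list)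
  define zs where "zs = as @ bs"
  have d: "distinct ys" using ys by (auto simp: S_def)
  then have nas: "Suc k \<notin> set as" "Suc k \<notin> set bs" using e by auto
  have setz: "set zs = {1..k}"
  proof -
    have "set ys = {1..Suc k}" using ys by (auto simp: S_def)
    moreover have "set zs = set ys - {Suc k}" unfolding e zs_def using nas by auto
    moreover have "{1..Suc k} - {Suc k} = {1..k}" by auto
    ultimately show ?thesis by presburger
  qed
  have ins: "ys = ins (length as) (Suc k) zs" using e by (simp add: ins_def zs_def)
  have lt: "\<forall>x\<in>set zs. x < Suc k" using setz by auto
  have len: "length as \<le> length zs" by (simp add: zs_def)
  have "adj W B ys" using ys by (auto simp: S_def)
  then have a: "adj W B zs \<and> slotb W B False zs (length as)"
    using adj_ins[OF lt len] ins by simp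
  have dz: "distinct zs" using d unfolding e zs_def by auto
  have zS: "zs \<in> S k" using a setz dz by (simp add: S_def)
  show "ys \<in> (\<lambda>(zs,p). ins p (Suc k) zs) ` (SIGMA zs:S k. {p. slotb W B False zs p})"
    by (rule image_eqI[where x="(zs, length as)"]) (use ins a zS in auto)
next
  fix ys assume "ys \<in> (\<lambda>(zs,p). ins p (Suc k) zs) ` (SIGMA zs:S k. {p. slotb W B False zs p})"
  then obtain zs p where z: "zs \<in> S k" "slotb W B False zs p" and ys: "ys = ins p (Suc k) zs" by auto
  have lt: "\<forall>x\<in>set zs. x < Suc k" using z by (auto simp: S_def)
  have len: "p \<le> length zs" using z by (auto simp: slotb_def)
  have "adj W B ys" using adj_ins[OF lt len] z ys by (auto simp: S_def)
  have sz: "set zs = {1..k}" and dz: "distinct zs" using z by (auto simp: S_def)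
  have nz: "Suc k \<notin> set zs" using sz by auto
  have tz: "set zs = set (take p zs) \<union> set (drop p zs)" by (metis append_take_drop_id set_append)
  have "set ys = insert (Suc k) (set zs)" unfolding ys ins_def using tz by auto
  also have "\<dots> = {1..Suc k}" using sz by auto
  finally have s1: "set ys = {1..Suc k}" .
  have dtd: "distinct (take p zs @ drop p zs)" using dz by simp
  have "distinct ys" unfolding ys ins_def using dtd nz tz by (auto simp del: append_take_drop_id)
  then show "ys \<in> S (Suc k)" using s1 \<open>adj W B ys\<close> by (simp add: S_def)
qed

lemma S_inj: "inj_on (\<lambda>(zs,p). ins p (Suc k) zs) (SIGMA zs:S k. {p. slotb W B False zs p})"
proof (rule inj_onI, clarify)
  fix zs p zs' p'
  assume z: "zs \<in> S k" "slotb W B False zs p" "zs' \<in> S k" "slotb W B False zs' p'"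
    and e: "ins p (Suc k) zs = ins p' (Suc k) zs'"
  have n: "Suc k \<notin> set zs" "Suc k \<notin> set zs'" using z by (auto simp: S_def)
  then have "Suc k \<notin> set (take p zs)" "Suc k \<notin> set (drop p zs)"
    by (meson in_set_takeD in_set_dropD)+
  then have "take p zs = take p' zs' \<and> drop p zs = drop p' zs'"
    using e append_Cons_eq_iff unfolding ins_def by metis
  moreover have "p \<le> length zs" "p' \<le> length zs'" using z by (auto simp: slotb_def)
  ultimately show "zs = zs' \<and> p = p'"
    by (metis append_take_drop_id length_take min.absorb2)
qed

lemma len_filter_card: "distinct zs \<Longrightarrow> set zs = {1..k} \<Longrightarrow> 0 \<notin> P \<Longrightarrow>
   length (filter (\<lambda>x. x \<in> P) zs) = card {x\<in>P. x < Suc k}"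
proof -
  assume a: "distinct zs" "set zs = {1..k}" "0 \<notin> P"
  have "length (filter (\<lambda>x. x \<in> P) zs) = card (set (filter (\<lambda>x. x \<in> P) zs))"
    by (rule distinct_card[symmetric]) (simp add: a)
  also have "set (filter (\<lambda>x. x \<in> P) zs) = {x\<in>P. x < Suc k}"
  proof -
    have "set (filter (\<lambda>x. x \<in> P) zs) = {1..k} \<inter> P" using a by auto
    also have "\<dots> = {x\<in>P. x < Suc k}"
    proof (rule set_eqI)
      fix x show "x \<in> {1..k} \<inter> P \<longleftrightarrow> x \<in> {x\<in>P. x < Suc k}"
        using a(3) by (cases x) auto
    qed
    finally show ?thesis .
  qed
  finally show ?thesis .
qed

lemma stage:
  fixes q :: "'a::field"
  assumes WB: "W \<inter> B = {}" and q: "q \<noteq> 0" and W0: "0 \<notin> W" and B0: "0 \<notin> B"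
  shows "(\<Sum>ys\<in>S i. q powi art' ys) = (\<Prod>j=1..i. qint q (avec W B j))"
proof (induction i)
  case 0 then show ?case by (simp add: S_0 art'_def)
next
  case (Suc k)
  have fin2: "finite {p. slotb W B False zs p}" for zs
    by (rule finite_subset[of _ "{..length zs}"]) (auto simp: slotb_def)
  have "(\<Sum>ys\<in>S (Suc k). q powi art' ys)
      = (\<Sum>(zs,p)\<in>(SIGMA zs:S k. {p. slotb W B False zs p}). q powi art' (ins p (Suc k) zs))"
    unfolding S_Suc by (subst sum.reindex[OF S_inj]) (simp add: case_prod_unfold)
  also have "\<dots> = (\<Sum>zs\<in>S k. \<Sum>p\<in>{p. slotb W B False zs p}. q powi art' (ins p (Suc k) zs))"
    by (rule sum.Sigma[symmetric]) (auto simp: S_finite fin2)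
  also have "\<dots> = (\<Sum>zs\<in>S k. q powi art' zs * qint q (avec W B (Suc k)))"
  proof (rule sum.cong[OF refl])
    fix zs assume z: "zs \<in> S k"
    have lt: "\<forall>x\<in>set zs. x < Suc k" using z by (auto simp: S_def)
    have "(\<Sum>p\<in>{p. slotb W B False zs p}. q powi art' (ins p (Suc k) zs))
        = (\<Sum>p\<in>{p. slotb W B False zs p}. q powi art' zs * q powi cc W B zs p)"
    proof (rule sum.cong[OF refl])
      fix p assume "p \<in> {p. slotb W B False zs p}"
      then have "p \<le> length zs" by (auto simp: slotb_def)
      then have "art' (ins p (Suc k) zs) = art' zs + cc W B zs p"
        using cnt_ins[OF lt] by (simp add: art'_def cc_def)
      then show "q powi art' (ins p (Suc k) zs) = q powi art' zs * q powi cc W B zs p"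
        by (simp add: power_int_add q)
    qed
    also have "\<dots> = q powi art' zs * (\<Sum>p\<in>{p. slotb W B False zs p}. q powi cc W B zs p)"
      by (simp add: sum_distrib_left)
    also have "(\<Sum>p\<in>{p. slotb W B False zs p}. q powi cc W B zs p) = qint q (1 + wc W B zs)"
    proof -
      have "validb W B False zs" using z adj_adjP by (auto simp: S_def validb_def)
      then show ?thesis using slot_count[OF WB q, of False zs] by simp
    qed
    also have "1 + wc W B zs = avec W B (Suc k)"
      using z len_filter_card[of zs k W] len_filter_card[of zs k B] W0 B0
      by (auto simp: S_def wc_def avec_def)
    finally show "(\<Sum>p\<in>{p. slotb W B False zs p}. q powi art' (ins p (Suc k) zs)) = q powi art' zs * qint q (avec W B (Suc k))" .
  qed
  also have "\<dots> = (\<Sum>zs\<in>S k. q powi art' zs) * qint q (avec W B (Suc k))"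
    by (simp add: sum_distrib_right)
  also have "\<dots> = (\<Prod>j=1..Suc k. qint q (avec W B j))"
    using Suc.IH by simp
  finally show ?case .
qed

end



lemma ent_0[simp]: "ent xs 0 = 0" by (simp add: ent_def)
lemma ent_Cons1[simp]: "ent (x#us) (Suc 0) = x" by (simp add: ent_def)
lemma ent_Cons_Suc: "1 \<le> j \<Longrightarrow> ent (x#us) (Suc j) = ent us j"
  by (cases j) (auto simp: ent_def)
lemma ent_nth: "1 \<le> i \<Longrightarrow> i \<le> length xs \<Longrightarrow> ent xs i = xs!(i-1)"
  by (simp add: ent_def)
lemma ent_out: "length xs < i \<Longrightarrow> ent xs i = 0"
  by (simp add: ent_def)

lemma sum_ind_card: "(\<Sum>k\<in>A. (if c k then 1 else 0::nat)) = card {k\<in>A. c k}" if "finite A"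
proof -
  have "{k\<in>A. c k} = A \<inter> Collect c" by auto
  then show ?thesis using that by (simp add: sum.If_cases)
qed

lemma T_cnt: "(\<Sum>k=1..length xs. card {j. j < k \<and> 1 \<le> j \<and> ent xs j \<in> P \<and> ent xs j < ent xs k}) = cnt P xs"
proof (induction xs)
  case Nil then show ?case by simp
next
  case (Cons x us)
  define L where "L = length us"
  define f where "f k = card {j. j < k \<and> 1 \<le> j \<and> ent (x#us) j \<in> P \<and> ent (x#us) j < ent (x#us) k}" for k
  define g where "g k = card {j. j < k \<and> 1 \<le> j \<and> ent us j \<in> P \<and> ent us j < ent us k}" for k
  have "(\<Sum>k=1..length (x#us). f k) = f 1 + (\<Sum>k=Suc 1..Suc L. f k)"
    unfolding L_def length_Cons by (rule sum.atLeast_Suc_atMost) simp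
  also have "f 1 = 0" by (simp add: f_def)
  also have "(\<Sum>k=Suc 1..Suc L. f k) = (\<Sum>k=1..L. f (Suc k))"
    by (rule sum.shift_bounds_cl_Suc_ivl)
  also have "\<dots> = (\<Sum>k=1..L. (if x \<in> P \<and> x < ent us k then 1 else 0) + g k)"
  proof (rule sum.cong[OF refl])
    fix k assume k: "k \<in> {1..L}"
    define G where "G = {j. j < k \<and> 1 \<le> j \<and> ent us j \<in> P \<and> ent us j < ent us k}"
    have e: "{j. j < Suc k \<and> 1 \<le> j \<and> ent (x#us) j \<in> P \<and> ent (x#us) j < ent (x#us) (Suc k)}
        = (if x \<in> P \<and> x < ent us k then {1} else {}) \<union> Suc ` G"
    proof (rule set_eqI)
      fix j
      show "j \<in> {j. j < Suc k \<and> 1 \<le> j \<and> ent (x#us) j \<in> P \<and> ent (x#us) j < ent (x#us) (Suc k)}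
        \<longleftrightarrow> j \<in> (if x \<in> P \<and> x < ent us k then {1} else {}) \<union> Suc ` G"
      proof (cases j)
        case 0 then show ?thesis by (auto simp: G_def)
      next
        case (Suc j')
        show ?thesis
        proof (cases j')
          case 0 then show ?thesis using Suc k by (auto simp: G_def ent_Cons_Suc)
        next
          case (Suc j'')
          have "(j \<in> Suc ` G) = (j' \<in> G)" using \<open>j = Suc j'\<close> by auto
          then show ?thesis using \<open>j = Suc j'\<close> Suc k by (auto simp: G_def ent_Cons_Suc)
        qed
      qed
    qed
    have fG: "finite G" by (rule finite_subset[of _ "{..<k}"]) (auto simp: G_def)
    have "1 \<notin> Suc ` G" by (auto simp: G_def)
    then have "card ((if x \<in> P \<and> x < ent us k then {1} else {}) \<union> Suc ` G)
       = (if x \<in> P \<and> x < ent us k then 1 else 0) + card (Suc ` G)"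
      using fG by (auto simp: card_insert_if)
    also have "card (Suc ` G) = card G" by (simp add: card_image)
    finally show "f (Suc k) = (if x \<in> P \<and> x < ent us k then 1 else 0) + g k"
      unfolding f_def g_def G_def[symmetric] e by simp
  qed
  also have "\<dots> = (\<Sum>k=1..L. (if x \<in> P \<and> x < ent us k then 1 else 0)) + cnt P us"
    using Cons.IH by (simp add: sum.distrib g_def L_def)
  also have "(\<Sum>k=1..L. (if x \<in> P \<and> x < ent us k then 1 else 0)) = card {k\<in>{1..L}. x \<in> P \<and> x < ent us k}"
    by (simp add: sum_ind_card)
  also have "\<dots> = (if x \<in> P then length (filter (\<lambda>y. x < y) us) else 0)"
  proof (cases "x \<in> P")
    case True
    have "{k\<in>{1..L}. x \<in> P \<and> x < ent us k} = Suc ` {i. i < L \<and> x < us!i}"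
    proof (rule set_eqI)
      fix k show "k \<in> {k\<in>{1..L}. x \<in> P \<and> x < ent us k} \<longleftrightarrow> k \<in> Suc ` {i. i < L \<and> x < us!i}"
        using True by (cases k) (auto simp: ent_def L_def)
    qed
    then show ?thesis using True by (simp add: card_image length_filter_conv_card L_def)
  qed simp
  finally show ?case by (simp add: f_def)
qed




lemma perm_len: "is_perm m xs \<Longrightarrow> length xs = m"
  unfolding is_perm_def by (metis card_atLeastAtMost diff_Suc_1 distinct_card)

lemma perm_ent_range: "is_perm m xs \<Longrightarrow> 1 \<le> i \<Longrightarrow> i \<le> m \<Longrightarrow> ent xs i \<in> {1..m}"
proof -
  assume a: "is_perm m xs" "1 \<le> i" "i \<le> m"
  then have "ent xs i = xs!(i-1)" "i - 1 < length xs" using perm_len by (auto simp: ent_def)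
  then show ?thesis using a(1) unfolding is_perm_def by (metis nth_mem)
qed

lemma perm_ent_pos: "is_perm m xs \<Longrightarrow> 1 \<le> i \<Longrightarrow> i \<le> m \<Longrightarrow> 0 < ent xs i"
  using perm_ent_range by fastforce

lemma perm_ent_inj: "is_perm m xs \<Longrightarrow> 1 \<le> i \<Longrightarrow> i \<le> m \<Longrightarrow> 1 \<le> j \<Longrightarrow> j \<le> m \<Longrightarrow>
   ent xs i = ent xs j \<Longrightarrow> i = j"
proof -
  assume a: "is_perm m xs" "1 \<le> i" "i \<le> m" "1 \<le> j" "j \<le> m" "ent xs i = ent xs j"
  have l: "length xs = m" using perm_len a by simp
  then have "xs!(i-1) = xs!(j-1)" using a by (simp add: ent_def)
  then have "i - 1 = j - 1" using a l unfolding is_perm_def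
    by (simp add: nth_eq_iff_index_eq)
  then show ?thesis using a by simp
qed



lemma perm_ent_surj: "is_perm m xs \<Longrightarrow> v \<in> {1..m} \<Longrightarrow> \<exists>i. 1 \<le> i \<and> i \<le> m \<and> ent xs i = v"
proof -
  assume a: "is_perm m xs" "v \<in> {1..m}"
  then have "v \<in> set xs" by (simp add: is_perm_def)
  then obtain k where k: "k < length xs" "xs!k = v" by (meson in_set_conv_nth)
  then show ?thesis using a perm_len[OF a(1)] by (intro exI[of _ "Suc k"]) (simp add: ent_def)
qed

lemma pos_iff:
  assumes P: "is_perm m xs" and pos: "\<And>j. pos j \<Longrightarrow> 1 \<le> j \<and> j \<le> m"
    and V: "{ent xs i | i. pos i} = W" and j: "j \<le> m"
  shows "pos j \<longleftrightarrow> 1 \<le> j \<and> ent xs j \<in> W"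
proof
  assume "pos j" then show "1 \<le> j \<and> ent xs j \<in> W" using pos V by blast
next
  assume h: "1 \<le> j \<and> ent xs j \<in> W"
  then have "ent xs j \<in> {ent xs i | i. pos i}" using V by simp
  then obtain j' where j': "pos j'" "ent xs j' = ent xs j" by auto
  then have "j' = j" using perm_ent_inj[OF P] pos[OF j'(1)] h j by metis
  then show "pos j" using j' by simp
qed

definition Loc :: "nat \<Rightarrow> nat set \<Rightarrow> nat set \<Rightarrow> nat list \<Rightarrow> bool" where
  "Loc n W B xs \<longleftrightarrow> is_perm (2*n+1) xs \<and> ent xs 1 \<notin> W \<and> ent xs (2*n+1) \<in> B \<and>
     (\<forall>i. 1 \<le> i \<longrightarrow> i < 2*n+1 \<longrightarrow>
        (ent xs (Suc i) < ent xs i \<longleftrightarrow> ent xs i \<in> B) \<and> (ent xs (Suc i) < ent xs i \<longleftrightarrow> ent xs (Suc i) \<in> W))"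

lemma Ahat_Loc1:
  assumes n: "n \<ge> 1" and A: "xs \<in> Ahat n W B"
  shows "Loc n W B xs"
proof -
  define m where "m = 2*n+1"
  have pr: "primary n xs" and vW: "valleys xs = W" and pB: "peaks xs = B" using A by (auto simp: Ahat_def)
  have P: "is_perm m xs" using pr by (simp add: primary_def Wstar_def m_def)
  have len: "length xs = m" using perm_len[OF P] .
  have nod: "\<And>i. \<not> ddesc_pos xs i" using pr by (simp add: primary_def)
  have lst: "ent xs (2*n) < ent xs m" using pr by (simp add: primary_def m_def)
  have vpos: "\<And>j. valley_pos xs j \<Longrightarrow> 1 \<le> j \<and> j \<le> m" by (simp add: valley_pos_def len)
  have ppos: "\<And>j. peak_pos xs j \<Longrightarrow> 1 \<le> j \<and> j \<le> m" by (simp add: peak_pos_def len)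
  have Vi: "\<And>j. j \<le> m \<Longrightarrow> valley_pos xs j \<longleftrightarrow> 1 \<le> j \<and> ent xs j \<in> W"
    using pos_iff[OF P vpos] vW by (simp add: valleys_def)
  have Pi: "\<And>j. j \<le> m \<Longrightarrow> peak_pos xs j \<longleftrightarrow> 1 \<le> j \<and> ent xs j \<in> B"
    using pos_iff[OF P ppos] pB by (simp add: peaks_def)
  have e0: "ent xs (Suc m) = 0" by (simp add: ent_out len)
  have rng: "\<And>i. 1 \<le> i \<Longrightarrow> i \<le> m \<Longrightarrow> 0 < ent xs i" using perm_ent_pos[OF P] by simp
  have inj: "\<And>i j. 1 \<le> i \<Longrightarrow> i \<le> m \<Longrightarrow> 1 \<le> j \<Longrightarrow> j \<le> m \<Longrightarrow> ent xs i = ent xs j \<Longrightarrow> i = j"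
    using perm_ent_inj[OF P] by blast
  have c1: "ent xs 1 \<notin> W"
  proof
    assume "ent xs 1 \<in> W"
    then have "valley_pos xs 1" using Vi[of 1] n by (simp add: m_def)
    then show False by (simp add: valley_pos_def)
  qed
  have c2: "ent xs m \<in> B"
  proof -
    have "peak_pos xs m" using lst e0 rng[of m] n len unfolding peak_pos_def m_def by simp
    then show ?thesis using Pi[of m] by simp
  qed
  have c3: "(ent xs (Suc i) < ent xs i \<longleftrightarrow> ent xs i \<in> B) \<and> (ent xs (Suc i) < ent xs i \<longleftrightarrow> ent xs (Suc i) \<in> W)"
    if i: "1 \<le> i" "i < m" for i
  proof (cases "ent xs (Suc i) < ent xs i")
    case True
    have a1: "ent xs (i-1) < ent xs i"
    proof -
      have "\<not> ent xs (i-1) > ent xs i" using nod[of i] True i len by (simp add: ddesc_pos_def)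
      moreover have "ent xs (i-1) \<noteq> ent xs i"
      proof (cases "i = 1")
        case True then show ?thesis using rng[of 1] i by simp
      next
        case False
        then have "1 \<le> i - 1" "i - 1 \<noteq> i" "i - 1 \<le> m" using i by auto
        then show ?thesis using inj[of "i-1" i] i by auto
      qed
      ultimately show ?thesis by simp
    qed
    have "peak_pos xs i" using a1 True i len by (simp add: peak_pos_def)
    then have b1: "ent xs i \<in> B" using Pi[of i] i by simp
    have a2: "ent xs (Suc i) < ent xs (Suc (Suc i))"
    proof -
      have "\<not> ent xs (Suc i) > ent xs (Suc (Suc i))" using nod[of "Suc i"] True i len by (simp add: ddesc_pos_def)
      moreover have "ent xs (Suc i) \<noteq> ent xs (Suc (Suc i))"
      proof (cases "Suc i = m")
        case True then show ?thesis using rng[of "Suc i"] e0 i by simp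
      next
        case False then show ?thesis using inj[of "Suc i" "Suc (Suc i)"] i by auto
      qed
      ultimately show ?thesis by simp
    qed
    have "valley_pos xs (Suc i)" using a2 True i len by (simp add: valley_pos_def)
    then have "ent xs (Suc i) \<in> W" using Vi[of "Suc i"] i by simp
    then show ?thesis using True b1 by simp
  next
    case False
    have nB: "ent xs i \<notin> B"
    proof
      assume "ent xs i \<in> B"
      then have "peak_pos xs i" using Pi[of i] i by simp
      then show False using False by (simp add: peak_pos_def)
    qed
    have nW: "ent xs (Suc i) \<notin> W"
    proof
      assume "ent xs (Suc i) \<in> W"
      then have "valley_pos xs (Suc i)" using Vi[of "Suc i"] i by simp
      then show False using False by (simp add: valley_pos_def)
    qed
    show ?thesis using False nB nW by simp
  qed
  show ?thesis using P c1 c2 c3 unfolding Loc_def m_def[symmetric] by blast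
qed




lemma Ahat_Loc2:
  assumes n: "n \<ge> 1" and L: "Loc n W B xs" and WB: "W \<inter> B = {}"
    and Wo: "W \<subseteq> {x\<in>{1..2*n+1}. odd x}" and Bo: "B \<subseteq> {x\<in>{1..2*n+1}. odd x}"
  shows "xs \<in> Ahat n W B"
proof -
  define m where "m = 2*n+1"
  have P: "is_perm m xs" and c1: "ent xs 1 \<notin> W" and c2: "ent xs m \<in> B"
    and c3: "\<And>i. 1 \<le> i \<Longrightarrow> i < m \<Longrightarrow> (ent xs (Suc i) < ent xs i \<longleftrightarrow> ent xs i \<in> B) \<and> (ent xs (Suc i) < ent xs i \<longleftrightarrow> ent xs (Suc i) \<in> W)"
    using L unfolding Loc_def m_def by auto
  have len: "length xs = m" using perm_len[OF P] .
  have c3': "(ent xs i < ent xs (i-1) \<longleftrightarrow> ent xs (i-1) \<in> B) \<and> (ent xs i < ent xs (i-1) \<longleftrightarrow> ent xs i \<in> W)"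
    if "2 \<le> i" "i \<le> m" for i
  proof -
    have "Suc (i-1) = i" "1 \<le> i - 1" "i - 1 < m" using that by auto
    then show ?thesis using c3[of "i-1"] by metis
  qed
  have e0: "ent xs (Suc m) = 0" by (simp add: ent_out len)
  have rng: "\<And>i. 1 \<le> i \<Longrightarrow> i \<le> m \<Longrightarrow> 0 < ent xs i" using perm_ent_pos[OF P] by simp
  have inj: "\<And>i j. 1 \<le> i \<Longrightarrow> i \<le> m \<Longrightarrow> 1 \<le> j \<Longrightarrow> j \<le> m \<Longrightarrow> ent xs i = ent xs j \<Longrightarrow> i = j"
    using perm_ent_inj[OF P] by blast
  have nsuc: "ent xs i \<noteq> ent xs (Suc i)" if "1 \<le> i" "i < m" for i
    using inj[of i "Suc i"] that by auto
  have nprev: "ent xs (i-1) \<noteq> ent xs i" if "1 \<le> i" "i \<le> m" for i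
  proof (cases "i = 1")
    case True then show ?thesis using rng[of 1] that by simp
  next
    case False
    then have "1 \<le> i - 1" "i - 1 \<noteq> i" "i - 1 \<le> m" using that by auto
    then show ?thesis using inj[of "i-1" i] that by auto
  qed
  have Wm: "ent xs m \<notin> W" using c2 WB by auto
  have desc: "odd (ent xs i) \<and> odd (ent xs (Suc i))" if "is_descent xs i" for i
  proof -
    have "1 \<le> i" "i < m" "ent xs (Suc i) < ent xs i" using that len by (auto simp: is_descent_def)
    then have "ent xs i \<in> B" "ent xs (Suc i) \<in> W" using c3 by auto
    then show ?thesis using Wo Bo by auto
  qed
  have oddm: "odd (ent xs m)" using c2 Bo by auto
  have W: "xs \<in> Wstar n" using P desc oddm by (simp add: Wstar_def m_def)
  have nod: "\<not> ddesc_pos xs i" for i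
  proof
    assume d: "ddesc_pos xs i"
    then have i: "1 \<le> i" "i \<le> m" and a: "ent xs (i-1) > ent xs i" "ent xs i > ent xs (Suc i)"
      using len by (auto simp: ddesc_pos_def)
    have "i \<noteq> 1" using a by auto
    then have "ent xs i \<in> W" using c3'[of i] i a by auto
    moreover have "ent xs i \<in> B"
    proof (cases "i = m")
      case True then show ?thesis using c2 by simp
    next
      case False then show ?thesis using c3[of i] i a by auto
    qed
    ultimately show False using WB by auto
  qed
  have lst: "ent xs (2*n) < ent xs (2*n+1)"
  proof -
    have "1 \<le> 2*n" "2*n < m" using n by (auto simp: m_def)
    then have "\<not> ent xs (Suc (2*n)) < ent xs (2*n)" using c3[of "2*n"] Wm by (auto simp: m_def)
    moreover have "ent xs (2*n) \<noteq> ent xs (Suc (2*n))" using nsuc[of "2*n"] n by (auto simp: m_def)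
    ultimately show ?thesis by simp
  qed
  have pr: "primary n xs" using W nod lst by (simp add: primary_def)
  have V: "valleys xs = W"
  proof
    show "valleys xs \<subseteq> W"
    proof
      fix v assume "v \<in> valleys xs"
      then obtain i where i: "valley_pos xs i" "v = ent xs i" by (auto simp: valleys_def)
      then have "1 \<le> i" "i \<le> m" "ent xs (i-1) > ent xs i" using len by (auto simp: valley_pos_def)
      moreover then have "i \<noteq> 1" by auto
      ultimately show "v \<in> W" using c3'[of i] i by auto
    qed
  next
    show "W \<subseteq> valleys xs"
    proof
      fix w assume w: "w \<in> W"
      then have "w \<in> {1..m}" using Wo by (auto simp: m_def)
      then obtain i where i: "1 \<le> i" "i \<le> m" "ent xs i = w" using perm_ent_surj[OF P] by blast
      have "i \<noteq> 1" using c1 w i by auto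
      have "i \<noteq> m" using Wm w i by auto
      have a1: "ent xs (i-1) > ent xs i" using c3'[of i] i w \<open>i \<noteq> 1\<close> by auto
      have "ent xs i \<notin> B" using w i WB by auto
      then have "\<not> ent xs (Suc i) < ent xs i" using c3[of i] i \<open>i \<noteq> m\<close> by auto
      then have a2: "ent xs i < ent xs (Suc i)" using nsuc[of i] i \<open>i \<noteq> m\<close> by auto
      have "valley_pos xs i" using a1 a2 i len by (simp add: valley_pos_def)
      then show "w \<in> valleys xs" using i by (auto simp: valleys_def)
    qed
  qed
  have Pk: "peaks xs = B"
  proof
    show "peaks xs \<subseteq> B"
    proof
      fix v assume "v \<in> peaks xs"
      then obtain i where i: "peak_pos xs i" "v = ent xs i" by (auto simp: peaks_def)
      then have "1 \<le> i" "i \<le> m" "ent xs i > ent xs (Suc i)" using len by (auto simp: peak_pos_def)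
      then show "v \<in> B" using c3[of i] i c2 by (cases "i = m") auto
    qed
  next
    show "B \<subseteq> peaks xs"
    proof
      fix b assume b: "b \<in> B"
      then have "b \<in> {1..m}" using Bo by (auto simp: m_def)
      then obtain i where i: "1 \<le> i" "i \<le> m" "ent xs i = b" using perm_ent_surj[OF P] by blast
      have bW: "b \<notin> W" using b WB by auto
      have a1: "ent xs (i-1) < ent xs i"
      proof (cases "i = 1")
        case True then show ?thesis using rng[of 1] i by simp
      next
        case False
        then have "\<not> ent xs i < ent xs (i-1)" using c3'[of i] i bW by auto
        then show ?thesis using nprev[of i] i by auto
      qed
      have a2: "ent xs i > ent xs (Suc i)"
      proof (cases "i = m")
        case True then show ?thesis using rng[of m] e0 i by simp
      next
        case False then show ?thesis using c3[of i] i b by auto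
      qed
      have "peak_pos xs i" using a1 a2 i len by (simp add: peak_pos_def)
      then show "b \<in> peaks xs" using i by (auto simp: peaks_def)
    qed
  qed
  show ?thesis using pr V Pk by (simp add: Ahat_def)
qed




lemma adj_nth: "adj W B xs \<longleftrightarrow> (\<forall>j. Suc j < length xs \<longrightarrow> R W B (xs!j) (xs!Suc j))"
proof (induction xs rule: adj.induct)
  case (1 x y r)
  show ?case
  proof
    assume "adj W B (x#y#r)"
    then have a: "R W B x y" "\<forall>j. Suc j < length (y#r) \<longrightarrow> R W B ((y#r)!j) ((y#r)!Suc j)" using 1 by auto
    show "\<forall>j. Suc j < length (x#y#r) \<longrightarrow> R W B ((x#y#r)!j) ((x#y#r)!Suc j)"
    proof (intro allI impI)
      fix j assume "Suc j < length (x#y#r)"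
      then show "R W B ((x#y#r)!j) ((x#y#r)!Suc j)" using a by (cases j) auto
    qed
  next
    assume a: "\<forall>j. Suc j < length (x#y#r) \<longrightarrow> R W B ((x#y#r)!j) ((x#y#r)!Suc j)"
    have "R W B x y" using a[rule_format, of 0] by simp
    moreover have "\<forall>j. Suc j < length (y#r) \<longrightarrow> R W B ((y#r)!j) ((y#r)!Suc j)"
    proof (intro allI impI)
      fix j assume "Suc j < length (y#r)"
      then show "R W B ((y#r)!j) ((y#r)!Suc j)" using a[rule_format, of "Suc j"] by simp
    qed
    ultimately show "adj W B (x#y#r)" using 1 by simp
  qed
qed auto

lemma qint_one: "qint (1::rat) k = of_nat (nat k)"
  by (simp add: qint_def)

lemma S_Loc:
  assumes n: "n \<ge> 1" and WB: "W \<inter> B = {}" and Ws: "W \<subseteq> {1..2*n+1}" and Bs: "B \<subseteq> {1..2*n+1}"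
    and cd: "card B = card W + 1" and xs: "xs \<in> S W B (2*n+1)"
  shows "Loc n W B xs"
proof -
  define m where "m = 2*n+1"
  have d: "distinct xs" and st: "set xs = {1..m}" and ad: "adj W B xs" using xs by (auto simp: S_def m_def)
  have P: "is_perm m xs" using d st by (simp add: is_perm_def)
  have len: "length xs = m" using perm_len[OF P] .
  have W0: "0 \<notin> W" and B0: "0 \<notin> B" using Ws Bs by auto
  have fW: "finite W" using Ws finite_subset by blast
  have fB: "finite B" using Bs finite_subset by blast
  have v: "validb W B False xs" using adj_adjP[OF ad] by (simp add: validb_def)
  have sc: "(\<Sum>p\<in>{p. slotb W B False xs p}. (1::rat) powi cc W B xs p) = of_nat (nat (1 + wc W B xs))"
    using slot_count[OF WB, of "1::rat" False xs] v by (simp add: qint_one)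
  have "{x\<in>W. x < Suc m} = W" using Ws by (auto simp: m_def)
  moreover have "{x\<in>B. x < Suc m} = B" using Bs by (auto simp: m_def)
  ultimately have "wc W B xs = int (card W) - int (card B)"
    using len_filter_card[OF d st W0] len_filter_card[OF d st B0] by (simp add: wc_def)
  then have "1 + wc W B xs = 0" using cd by simp
  then have "card {p. slotb W B False xs p} = 0" using sc by simp
  moreover have "finite {p. slotb W B False xs p}"
    by (rule finite_subset[of _ "{..length xs}"]) (auto simp: slotb_def)
  ultimately have nsl: "\<And>p. \<not> slotb W B False xs p" by auto
  have Rn: "\<And>j. Suc j < m \<Longrightarrow> R W B (xs!j) (xs!Suc j)" using ad adj_nth len by metis
  have m1: "m \<ge> 3" using n by (simp add: m_def)
  have c1: "ent xs 1 \<notin> W"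
  proof -
    have "\<not> slotb W B False xs 0" by (rule nsl)
    then have "xs!0 \<notin> W" using len m1 by (auto simp: slotb_def)
    then show ?thesis using len m1 by (simp add: ent_def)
  qed
  have c2: "ent xs m \<in> B"
  proof -
    have "\<not> slotb W B False xs m" by (rule nsl)
    then have "xs!(m-1) \<in> B" using len m1 by (auto simp: slotb_def)
    then show ?thesis using len m1 by (simp add: ent_def)
  qed
  have c3: "(ent xs (Suc i) < ent xs i \<longleftrightarrow> ent xs i \<in> B) \<and> (ent xs (Suc i) < ent xs i \<longleftrightarrow> ent xs (Suc i) \<in> W)"
    if i: "1 \<le> i" "i < m" for i
  proof -
    have ex: "ent xs i = xs!(i-1)" "ent xs (Suc i) = xs!i" using i len by (auto simp: ent_def)
    have "\<not> slotb W B False xs i" by (rule nsl)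
    then have s: "xs!i \<in> W \<Longrightarrow> xs!(i-1) \<in> B" using i len by (auto simp: slotb_def)
    have r: "R W B (xs!(i-1)) (xs!i)" using Rn[of "i-1"] i by simp
    show ?thesis
    proof (cases "xs!i \<in> W")
      case True then show ?thesis using s r ex by (auto simp: R_def)
    next
      case False then show ?thesis using r ex by (auto simp: R_def)
    qed
  qed
  show ?thesis using P c1 c2 c3 unfolding Loc_def m_def[symmetric] by blast
qed

lemma Loc_S:
  assumes L: "Loc n W B xs"
  shows "xs \<in> S W B (2*n+1)"
proof -
  define m where "m = 2*n+1"
  have P: "is_perm m xs"
    and c3: "\<And>i. 1 \<le> i \<Longrightarrow> i < m \<Longrightarrow> (ent xs (Suc i) < ent xs i \<longleftrightarrow> ent xs i \<in> B) \<and> (ent xs (Suc i) < ent xs i \<longleftrightarrow> ent xs (Suc i) \<in> W)"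
    using L unfolding Loc_def m_def by auto
  have len: "length xs = m" using perm_len[OF P] .
  have d: "distinct xs" using P by (simp add: is_perm_def)
  have "R W B (xs!j) (xs!Suc j)" if j: "Suc j < length xs" for j
  proof -
    have ex: "ent xs (Suc j) = xs!j" "ent xs (Suc (Suc j)) = xs!Suc j" using j by (auto simp: ent_def)
    have ne: "xs!j \<noteq> xs!Suc j" using d j by (simp add: nth_eq_iff_index_eq)
    show ?thesis using c3[of "Suc j"] j len ex ne by (auto simp: R_def)
  qed
  then have "adj W B xs" using adj_nth by blast
  then show ?thesis using P by (simp add: S_def is_perm_def m_def)
qed

lemma art_eq:
  assumes A: "xs \<in> Ahat n W B"
  shows "art xs = art' W B xs"
proof -
  define m where "m = 2*n+1"
  have pr: "primary n xs" and vW: "valleys xs = W" and pB: "peaks xs = B" using A by (auto simp: Ahat_def)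
  have P: "is_perm m xs" using pr by (simp add: primary_def Wstar_def m_def)
  have len: "length xs = m" using perm_len[OF P] .
  have vpos: "\<And>j. valley_pos xs j \<Longrightarrow> 1 \<le> j \<and> j \<le> m" by (simp add: valley_pos_def len)
  have ppos: "\<And>j. peak_pos xs j \<Longrightarrow> 1 \<le> j \<and> j \<le> m" by (simp add: peak_pos_def len)
  have Vi: "\<And>j. j \<le> m \<Longrightarrow> valley_pos xs j \<longleftrightarrow> 1 \<le> j \<and> ent xs j \<in> W"
    using pos_iff[OF P vpos] vW by (simp add: valleys_def)
  have Pi: "\<And>j. j \<le> m \<Longrightarrow> peak_pos xs j \<longleftrightarrow> 1 \<le> j \<and> ent xs j \<in> B"
    using pos_iff[OF P ppos] pB by (simp add: peaks_def)
  have "art xs = (\<Sum>k=1..length xs. int (card {j. j < k \<and> 1 \<le> j \<and> ent xs j \<in> W \<and> ent xs j < ent xs k})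
      - int (card {j. j < k \<and> 1 \<le> j \<and> ent xs j \<in> B \<and> ent xs j < ent xs k}))"
    unfolding art_def
  proof (rule sum.cong[OF refl])
    fix k assume k: "k \<in> {1..length xs}"
    have "{j. j < k \<and> valley_pos xs j \<and> ent xs j < ent xs k} = {j. j < k \<and> 1 \<le> j \<and> ent xs j \<in> W \<and> ent xs j < ent xs k}"
      using Vi k len by (auto)
    moreover have "{j. j < k \<and> peak_pos xs j \<and> ent xs j < ent xs k} = {j. j < k \<and> 1 \<le> j \<and> ent xs j \<in> B \<and> ent xs j < ent xs k}"
      using Pi k len by (auto)
    ultimately show "int (card {j. j < k \<and> valley_pos xs j \<and> ent xs j < ent xs k}) -
         int (card {j. j < k \<and> peak_pos xs j \<and> ent xs j < ent xs k}) =
         int (card {j. j < k \<and> 1 \<le> j \<and> ent xs j \<in> W \<and> ent xs j < ent xs k}) -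
         int (card {j. j < k \<and> 1 \<le> j \<and> ent xs j \<in> B \<and> ent xs j < ent xs k})" by simp
  qed
  also have "\<dots> = int (cnt W xs) - int (cnt B xs)"
    by (simp add: sum_subtractf T_cnt[symmetric] of_nat_sum[symmetric] del: of_nat_sum)
  finally show ?thesis by (simp add: art'_def)
qed

theorem mainTheorem7:
  fixes n :: nat and Wh Bl :: "nat set" and q :: "'a::field"
  assumes "n \<ge> 1" and "admissible n Wh Bl" and "q \<noteq> 0"
  shows "(\<Sum>\<sigma>\<in>Ahat n Wh Bl. q powi art \<sigma>) = (\<Prod>i=1..2*n. qint q (avec Wh Bl i))"
proof -
  define m where "m = 2*n+1"
  have Wo: "Wh \<subseteq> {x\<in>{1..2*n+1}. odd x}" and Bo: "Bl \<subseteq> {x\<in>{1..2*n+1}. odd x}"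
    and WB: "Wh \<inter> Bl = {}" and cd: "card Bl = card Wh + 1" and mB: "m \<in> Bl"
    using assms(2) by (auto simp: admissible_def m_def)
  have Ws: "Wh \<subseteq> {1..2*n+1}" and Bs: "Bl \<subseteq> {1..2*n+1}" using Wo Bo by auto
  have W0: "0 \<notin> Wh" and B0: "0 \<notin> Bl" using Ws Bs by auto
  have fB: "finite Bl" using Bs finite_subset by blast
  have AS: "Ahat n Wh Bl = S Wh Bl m"
  proof (rule set_eqI, rule iffI)
    fix xs assume "xs \<in> Ahat n Wh Bl"
    then show "xs \<in> S Wh Bl m" using Ahat_Loc1[OF assms(1)] Loc_S by (simp add: m_def)
  next
    fix xs assume "xs \<in> S Wh Bl m"
    then have "Loc n Wh Bl xs" using S_Loc[OF assms(1) WB Ws Bs cd] by (simp add: m_def)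
    then show "xs \<in> Ahat n Wh Bl" using Ahat_Loc2[OF assms(1) _ WB Wo Bo] by simp
  qed
  have "(\<Sum>\<sigma>\<in>Ahat n Wh Bl. q powi art \<sigma>) = (\<Sum>\<sigma>\<in>S Wh Bl m. q powi art' Wh Bl \<sigma>)"
    using art_eq AS by (metis (no_types, lifting) sum.cong)
  also have "\<dots> = (\<Prod>j=1..m. qint q (avec Wh Bl j))"
    by (rule stage[OF WB assms(3) W0 B0])
  also have "\<dots> = (\<Prod>j=1..2*n. qint q (avec Wh Bl j)) * qint q (avec Wh Bl m)"
    by (simp add: m_def)
  also have "avec Wh Bl m = 1"
  proof -
    have "m \<notin> Wh" using mB WB by auto
    have "\<forall>x\<in>Wh. x < m"
    proof
      fix x assume "x \<in> Wh"
      then have "x \<le> m" "x \<noteq> m" using Ws \<open>m \<notin> Wh\<close> by (auto simp: m_def)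
      then show "x < m" by simp
    qed
    then have "{x\<in>Wh. x < m} = Wh" by auto
    moreover have "{x\<in>Bl. x < m} = Bl - {m}" using Bs by (auto simp: m_def)
    moreover have "card (Bl - {m}) = card Wh" using card_Diff_singleton[OF mB] cd by simp
    ultimately show ?thesis by (simp add: avec_def)
  qed
  finally show ?thesis by simp
qed


end
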